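(* Let $X$ be a Hausdorff space and $\mathcal{H}$ a subspace with $\mathcal{F}_2(X)\subset\mathcal{H}\subset\mathcal{K}(X)$. Then $\mathcal{H}$ is extremally disconnected if and only if $X$ is discrete.
   Context: $\mathcal{K}(X)$ is the set of nonempty compact subsets of $X$ with the Vietoris topology (generated by $U^+=\{A: A\subset U\}$ and $U^-=\{A: A\cap U\neq\emptyset\}$ for $U$ open in $X$), and $\mathcal{F}_2(X)$ its subspace of nonempty subsets with at most $2$ points. A space is extremally disconnected if the closure of every open set is open. *)

theory Defs
  imports "HOL-Analysis.Analysis"
begin

definition hyperspace_K :: "'a topology \<Rightarrow> 'a set set" where
  "hyperspace_K X = {A. A \<noteq> {} \<and> compactin X A}"

definition hyperspace_F2 :: "'a topology \<Rightarrow> 'a set set" where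
  "hyperspace_F2 X = {A. A \<noteq> {} \<and> A \<subseteq> topspace X \<and> finite A \<and> card A \<le> 2}"

definition vietoris_upper :: "'a topology \<Rightarrow> 'a set \<Rightarrow> 'a set set" where
  "vietoris_upper X U = {A \<in> hyperspace_K X. A \<subseteq> U}"

definition vietoris_lower :: "'a topology \<Rightarrow> 'a set \<Rightarrow> 'a set set" where
  "vietoris_lower X U = {A \<in> hyperspace_K X. A \<inter> U \<noteq> {}}"

definition vietoris :: "'a topology \<Rightarrow> 'a set topology" where
  "vietoris X = topology_generated_by
     ({vietoris_upper X U | U. openin X U} \<union> {vietoris_lower X U | U. openin X U})"

definition extremally_disconnected :: "'a topology \<Rightarrow> bool" where
  "extremally_disconnected T \<longleftrightarrow> (\<forall>U. openin T U \<longrightarrow> openin T (T closure_of U))"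

end

theory Submission
  imports Defs
begin

lemma vt_open_upper: "openin X U \<Longrightarrow> openin (vietoris X) (vietoris_upper X U)"
  unfolding vietoris_def openin_topology_generated_by_iff
  by (rule generate_topology_on.Basis) blast

lemma vt_open_lower: "openin X U \<Longrightarrow> openin (vietoris X) (vietoris_lower X U)"
  unfolding vietoris_def openin_topology_generated_by_iff
  by (rule generate_topology_on.Basis) blast

lemma vt_topspace: "topspace (vietoris X) = hyperspace_K X"
proof -
  have "vietoris_upper X (topspace X) = hyperspace_K X"
    by (auto simp: vietoris_upper_def hyperspace_K_def dest: compactin_subset_topspace)
  then show ?thesis
    unfolding vietoris_def topology_generated_by_topspace
    by (auto simp: vietoris_upper_def vietoris_lower_def)
qed

lemma vt_nbhd_aux:
  assumes "generate_topology_on S W"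
    and "S = {vietoris_upper X U | U. openin X U} \<union> {vietoris_lower X U | U. openin X U}"
  shows "{x} \<in> W \<Longrightarrow> \<exists>U. openin X U \<and> x \<in> U \<and> vietoris_upper X U \<subseteq> W"
  using assms
proof (induction arbitrary: x rule: generate_topology_on.induct)
  case Empty
  then show ?case by simp
next
  case (Int a b)
  then have "{x} \<in> a" "{x} \<in> b" by auto
  then obtain U1 U2 where "openin X U1" "x \<in> U1" "vietoris_upper X U1 \<subseteq> a"
      "openin X U2" "x \<in> U2" "vietoris_upper X U2 \<subseteq> b" using Int.IH Int.prems(2) by meson
  then show ?case
    by (intro exI[of _ "U1 \<inter> U2"]) (auto simp: vietoris_upper_def)
next
  case (UN K)
  then obtain k where "k \<in> K" "{x} \<in> k" by auto
  then obtain U where "openin X U" "x \<in> U" "vietoris_upper X U \<subseteq> k"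
    using UN.IH UN.prems(2) by meson
  then show ?case using \<open>k \<in> K\<close> by blast
next
  case (Basis s)
  then obtain U where U: "openin X U" "s = vietoris_upper X U \<or> s = vietoris_lower X U" by auto
  show ?case
  proof (intro exI conjI)
    show "openin X U" by (fact U(1))
    show "x \<in> U" using U(2) Basis.prems(1)
      by (auto simp: vietoris_upper_def vietoris_lower_def)
    show "vietoris_upper X U \<subseteq> s" using U(2)
      by (auto simp: vietoris_upper_def vietoris_lower_def hyperspace_K_def)
  qed
qed

lemma vt_nbhd:
  assumes "openin (vietoris X) W" "{x} \<in> W"
  shows "\<exists>U. openin X U \<and> x \<in> U \<and> vietoris_upper X U \<subseteq> W"
  using vt_nbhd_aux[OF assms(1)[unfolded vietoris_def openin_topology_generated_by_iff] refl assms(2)] .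

lemma vt_in_closure:
  assumes "H \<subseteq> hyperspace_K X" "{x} \<in> H" "Os \<subseteq> H"
    and "\<And>U. openin X U \<Longrightarrow> x \<in> U \<Longrightarrow> \<exists>A\<in>Os. A \<subseteq> U"
  shows "{x} \<in> subtopology (vietoris X) H closure_of Os"
  unfolding in_closure_of
proof (intro conjI allI impI)
  show "{x} \<in> topspace (subtopology (vietoris X) H)"
    using assms(1,2) by (auto simp: vt_topspace)
  fix T assume T: "{x} \<in> T \<and> openin (subtopology (vietoris X) H) T"
  then obtain W where W: "openin (vietoris X) W" "T = W \<inter> H"
    by (auto simp: openin_subtopology)
  have "{x} \<in> W" using T W(2) by blast
  then obtain U where U: "openin X U" "x \<in> U" "vietoris_upper X U \<subseteq> W"
    using vt_nbhd[OF W(1)] by blast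
  then obtain A where A: "A \<in> Os" "A \<subseteq> U" using assms(4) by blast
  then have "A \<in> H" using assms(3) by blast
  then have "A \<in> vietoris_upper X U" using A assms(1) unfolding vietoris_upper_def by blast
  then have "A \<in> T" using U(3) W(2) \<open>A \<in> H\<close> by blast
  then show "\<exists>y. y \<in> Os \<and> y \<in> T" using A(1) by blast
qed

lemma vt_open_singleton:
  assumes disc: "\<And>S. S \<subseteq> topspace X \<Longrightarrow> openin X S"
    and A: "A \<in> hyperspace_K X" "finite A"
  shows "openin (vietoris X) {A}"
proof -
  have Ane: "A \<noteq> {}" and Asub: "A \<subseteq> topspace X"
    using A(1) by (auto simp: hyperspace_K_def dest: compactin_subset_topspace)
  have eq: "{A} = vietoris_upper X A \<inter> \<Inter>((\<lambda>a. vietoris_lower X {a}) ` A)"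
  proof
    show "{A} \<subseteq> vietoris_upper X A \<inter> \<Inter>((\<lambda>a. vietoris_lower X {a}) ` A)"
    proof -
      have "A \<in> vietoris_upper X A" using A(1) unfolding vietoris_upper_def by blast
      moreover have "A \<in> vietoris_lower X {a}" if "a \<in> A" for a
        using A(1) that unfolding vietoris_lower_def by blast
      ultimately show ?thesis by blast
    qed
    show "vietoris_upper X A \<inter> \<Inter>((\<lambda>a. vietoris_lower X {a}) ` A) \<subseteq> {A}"
    proof
      fix B assume B: "B \<in> vietoris_upper X A \<inter> \<Inter>((\<lambda>a. vietoris_lower X {a}) ` A)"
      then have "B \<subseteq> A" by (simp add: vietoris_upper_def)
      moreover have "A \<subseteq> B"
      proof
        fix a assume "a \<in> A"
        then have "B \<in> vietoris_lower X {a}" using B by blast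
        then show "a \<in> B" by (simp add: vietoris_lower_def)
      qed
      ultimately show "B \<in> {A}" by blast
    qed
  qed
  have "openin (vietoris X) (vietoris_upper X A)"
    by (rule vt_open_upper[OF disc[OF Asub]])
  moreover have "openin (vietoris X) (\<Inter>((\<lambda>a. vietoris_lower X {a}) ` A))"
  proof (rule openin_Inter)
    show "finite ((\<lambda>a. vietoris_lower X {a}) ` A)" using A(2) by simp
    show "(\<lambda>a. vietoris_lower X {a}) ` A \<noteq> {}" using Ane by simp
    fix Y assume "Y \<in> (\<lambda>a. vietoris_lower X {a}) ` A"
    then obtain a where a: "a \<in> A" "Y = vietoris_lower X {a}" by blast
    then have "{a} \<subseteq> topspace X" using Asub by blast
    then show "openin (vietoris X) Y" unfolding a(2) by (rule vt_open_lower[OF disc])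
  qed
  ultimately show ?thesis unfolding eq by (rule openin_Int)
qed

lemma disc_open: "X = discrete_topology U \<Longrightarrow> S \<subseteq> U \<Longrightarrow> openin X S"
  by simp

lemma disc_fin: "X = discrete_topology U \<Longrightarrow> compactin X A \<Longrightarrow> finite A"
  by (simp add: compactin_discrete_topology)

lemma openin_UN_vt:
  assumes "\<And>P. P \<in> M \<Longrightarrow> openin T (f P)"
  shows "openin T (\<Union>P\<in>M. f P)"
  using assms by (intro openin_Union) blast

lemma closure_nbhd:
  "x \<in> X closure_of S \<Longrightarrow> openin X U \<Longrightarrow> x \<in> U \<Longrightarrow> \<exists>y\<in>S. y \<in> U"
  by (auto simp: in_closure_of)

theorem proposition3p3:
  fixes X :: "'a topology" and H :: "'a set set"
  assumes "Hausdorff_space X"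
    and "hyperspace_F2 X \<subseteq> H" and "H \<subseteq> hyperspace_K X"
  shows "extremally_disconnected (subtopology (vietoris X) H)
           \<longleftrightarrow> X = discrete_topology (topspace X)"
proof
  assume ED: "extremally_disconnected (subtopology (vietoris X) H)"
  define T where "T = subtopology (vietoris X) H"
  have ED': "\<And>U. openin T U \<Longrightarrow> openin T (T closure_of U)"
    using ED unfolding T_def extremally_disconnected_def by blast
  have sing: "\<And>a. a \<in> topspace X \<Longrightarrow> {a} \<in> H"
    using assms(2) by (auto simp: hyperspace_F2_def)
  have pair: "\<And>a b. a \<in> topspace X \<Longrightarrow> b \<in> topspace X \<Longrightarrow> {a, b} \<in> H"
  proof -
    fix a b assume "a \<in> topspace X" "b \<in> topspace X"
    moreover have "card {a, b} \<le> 2" by (simp add: card_insert_if)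
    ultimately show "{a, b} \<in> H" using assms(2) by (auto simp: hyperspace_F2_def)
  qed
  show "X = discrete_topology (topspace X)"
  proof (rule ccontr)
    assume nd: "X \<noteq> discrete_topology (topspace X)"
    then obtain x where x: "x \<in> topspace X" "\<not> openin X {x}"
    proof -
      have "\<not> (\<forall>x\<in>topspace X. openin X {x})"
        using nd discrete_topology_unique[of "topspace X" X] by auto
      then show ?thesis using that by blast
    qed
    have nonisol: "\<exists>y\<in>U. y \<noteq> x" if "openin X U" "x \<in> U" for U
    proof (rule ccontr)
      assume "\<not> (\<exists>y\<in>U. y \<noteq> x)"
      then have "U = {x}" using that(2) by blast
      then show False using that(1) x(2) by simp
    qed
    define \<A> where "\<A> = {M. (\<forall>P\<in>M. openin X P \<and> P \<noteq> {} \<and> x \<notin> X closure_of P) \<and> pairwise disjnt M}"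
    have "\<exists>M\<in>\<A>. \<forall>N\<in>\<A>. M \<subseteq> N \<longrightarrow> N = M"
    proof (rule subset_Zorn')
      fix C assume C: "subset.chain \<A> C"
      then have C1: "C \<subseteq> \<A>" and C2: "\<forall>M1\<in>C. \<forall>M2\<in>C. M1 \<subseteq> M2 \<or> M2 \<subseteq> M1"
        by (auto simp: subset_chain_def)
      have "\<forall>P\<in>\<Union>C. openin X P \<and> P \<noteq> {} \<and> x \<notin> X closure_of P"
        using C1 by (auto simp: \<A>_def)
      moreover have "pairwise disjnt (\<Union>C)"
        unfolding pairwise_def
      proof (intro ballI impI)
        fix P Q assume P: "P \<in> \<Union>C" and Q: "Q \<in> \<Union>C" and ne: "P \<noteq> Q"
        then obtain M1 M2 where "M1 \<in> C" "M2 \<in> C" "P \<in> M1" "Q \<in> M2" by blast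
        with C2 obtain M where "M \<in> C" "P \<in> M" "Q \<in> M" by blast
        then have "pairwise disjnt M" using C1 by (auto simp: \<A>_def)
        then show "disjnt P Q" using \<open>P \<in> M\<close> \<open>Q \<in> M\<close> ne by (simp add: pairwise_def)
      qed
      ultimately show "\<Union>C \<in> \<A>" by (simp add: \<A>_def)
    qed
    then obtain M where M: "M \<in> \<A>" and Mmax: "\<And>N. N \<in> \<A> \<Longrightarrow> M \<subseteq> N \<Longrightarrow> N = M"
      by blast
    have Mo: "\<And>P. P \<in> M \<Longrightarrow> openin X P" and Mcl: "\<And>P. P \<in> M \<Longrightarrow> x \<notin> X closure_of P"
      and Mne: "\<And>P. P \<in> M \<Longrightarrow> P \<noteq> {}" and Md: "pairwise disjnt M"
      using M by (auto simp: \<A>_def)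
    have Mdisj: "\<And>P Q. P \<in> M \<Longrightarrow> Q \<in> M \<Longrightarrow> P \<inter> Q \<noteq> {} \<Longrightarrow> P = Q"
      using Md unfolding pairwise_def disjnt_def by blast
    have xcl: "x \<in> X closure_of \<Union>M"
    proof (rule ccontr)
      assume "x \<notin> X closure_of \<Union>M"
      then obtain U where U: "openin X U" "x \<in> U" "\<And>z. z \<in> \<Union>M \<Longrightarrow> z \<notin> U"
        using x(1) unfolding in_closure_of by blast
      obtain y where y: "y \<in> U" "y \<noteq> x" using nonisol U(1,2) by blast
      have yX: "y \<in> topspace X" using U(1) y(1) openin_subset by blast
      obtain Vx Vy where V: "openin X Vx" "openin X Vy" "x \<in> Vx" "y \<in> Vy" "disjnt Vx Vy"
    proof -
      have "\<exists>U V. openin X U \<and> openin X V \<and> x \<in> U \<and> y \<in> V \<and> disjnt U V"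
        using assms(1) x(1) yX y(2) unfolding Hausdorff_space_def by blast
      then show ?thesis using that by blast
    qed
      define P where "P = Vy \<inter> U"
      have Po: "openin X P" using V(2) U(1) by (simp add: P_def openin_Int)
      have yP: "y \<in> P" using V(4) y(1) by (simp add: P_def)
      have xP: "x \<notin> X closure_of P"
      proof
        assume "x \<in> X closure_of P"
        then obtain z where "z \<in> P" "z \<in> Vx" using V(1,3) unfolding in_closure_of by blast
        then show False using V(5) by (auto simp: P_def disjnt_def)
      qed
      have PM: "\<And>Q. Q \<in> M \<Longrightarrow> disjnt P Q"
        using U(3) by (auto simp: P_def disjnt_def)
      have "pairwise disjnt (insert P M)"
        using Md PM by (auto simp: pairwise_insert disjnt_sym)
      moreover have "\<forall>Q\<in>insert P M. openin X Q \<and> Q \<noteq> {} \<and> x \<notin> X closure_of Q"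
        using Mo Mne Mcl Po yP xP by blast
      ultimately have "insert P M \<in> \<A>" unfolding \<A>_def by blast
      then have "insert P M = M" using Mmax by blast
      then have "P \<in> M" by blast
      then have "y \<in> \<Union>M" using yP by blast
      then show False using U(3) y(1) by blast
    qed
    define O1 where "O1 = H \<inter> (\<Union>P\<in>M. vietoris_upper X P)"
    define O2 where "O2 = H \<inter> (\<Union>P\<in>M. \<Union>Q\<in>M - {P}. vietoris_lower X P \<inter> vietoris_lower X Q)"
    have O1o: "openin T O1"
      unfolding T_def O1_def
      by (intro openin_subtopology_Int2 openin_UN_vt vt_open_upper Mo)
    have O2o: "openin T O2"
      unfolding T_def O2_def
    proof (intro openin_subtopology_Int2 openin_UN_vt)
      fix P Q assume "P \<in> M" "Q \<in> M - {P}"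
      then show "openin (vietoris X) (vietoris_lower X P \<inter> vietoris_lower X Q)"
        by (intro openin_Int vt_open_lower Mo) auto
    qed
    have O12: "O2 \<inter> O1 = {}"
    proof (rule ccontr)
      assume "O2 \<inter> O1 \<noteq> {}"
      then obtain A where A2: "A \<in> O2" and A1: "A \<in> O1" by blast
      from A1 obtain P where P: "P \<in> M" "A \<in> vietoris_upper X P"
        unfolding O1_def by blast
      from A2 obtain P' Q where PQ: "P' \<in> M" "Q \<in> M - {P'}"
          "A \<in> vietoris_lower X P' \<inter> vietoris_lower X Q"
        unfolding O2_def by blast
      have "A \<subseteq> P" using P(2) by (simp add: vietoris_upper_def)
      moreover have "A \<inter> P' \<noteq> {}" "A \<inter> Q \<noteq> {}" using PQ(3) by (simp_all add: vietoris_lower_def)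
      ultimately have "P \<inter> P' \<noteq> {}" "P \<inter> Q \<noteq> {}" by blast+
      then have "P = P'" "P = Q" using Mdisj P(1) PQ(1,2) by blast+
      then show False using PQ(2) by simp
    qed
    have xH: "{x} \<in> H" using sing x(1) .
    have c1: "{x} \<in> T closure_of O1"
      unfolding T_def
    proof (rule vt_in_closure[OF assms(3) xH])
      show "O1 \<subseteq> H" by (simp add: O1_def)
      fix U assume U: "openin X U" "x \<in> U"
      then obtain a P where a: "a \<in> U" "P \<in> M" "a \<in> P"
        using closure_nbhd[OF xcl] by blast
      have aX: "a \<in> topspace X" using U(1) a(1) openin_subset by blast
      have "{a} \<in> hyperspace_K X" using assms(3) sing[OF aX] by (rule subsetD)
      then have "{a} \<in> vietoris_upper X P"
        using a(3) by (simp add: vietoris_upper_def)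
      then have "{a} \<in> O1"
        using sing[OF aX] a(2) unfolding O1_def by blast
      then show "\<exists>A\<in>O1. A \<subseteq> U" using a(1) by blast
    qed
    have c2: "{x} \<in> T closure_of O2"
      unfolding T_def
    proof (rule vt_in_closure[OF assms(3) xH])
      show "O2 \<subseteq> H" by (simp add: O2_def)
      fix U assume U: "openin X U" "x \<in> U"
      then obtain a P where a: "a \<in> U" "P \<in> M" "a \<in> P"
        using closure_nbhd[OF xcl] by blast
      define U' where "U' = U - X closure_of P"
      have U'o: "openin X U'" unfolding U'_def using U(1) by (simp add: openin_diff)
      have "x \<in> U'" using U(2) Mcl[OF a(2)] by (simp add: U'_def)
      then obtain b Q where b: "b \<in> U'" "Q \<in> M" "b \<in> Q"
        using closure_nbhd[OF xcl U'o] by blast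
      have "P \<subseteq> X closure_of P"
        using Mo[OF a(2)] by (simp add: closure_of_subset openin_subset)
      then have QP: "Q \<noteq> P" using b by (auto simp: U'_def)
      have aX: "a \<in> topspace X" using U(1) a(1) openin_subset by blast
      have bX: "b \<in> topspace X" using U'o b(1) openin_subset by blast
      have bU: "b \<in> U" using b(1) by (simp add: U'_def)
      have "{a, b} \<in> H" using pair[OF aX bX] .
      then have "{a, b} \<in> hyperspace_K X" by (rule subsetD[OF assms(3)])
      then have "{a, b} \<in> vietoris_lower X P \<inter> vietoris_lower X Q"
        using a(3) b(3) by (simp add: vietoris_lower_def)
      then have "{a, b} \<in> (\<Union>Q\<in>M - {P}. vietoris_lower X P \<inter> vietoris_lower X Q)"
        using b(2) QP by blast
      then have "{a, b} \<in> O2"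
        using \<open>{a, b} \<in> H\<close> a(2) unfolding O2_def by blast
      moreover have "{a, b} \<subseteq> U" using a(1) bU by simp
      ultimately show "\<exists>A\<in>O2. A \<subseteq> U" by (rule bexI[rotated])
    qed
    have C1o: "openin T (T closure_of O1)" using ED' O1o .
    have "O2 \<inter> T closure_of O1 = {}"
      using openin_Int_closure_of_eq_empty[OF O2o] O12 by simp
    then have "(T closure_of O1) \<inter> O2 = {}" by blast
    then have "(T closure_of O1) \<inter> T closure_of O2 = {}"
      using openin_Int_closure_of_eq_empty[OF C1o] by simp
    then show False using c1 c2 by blast
  qed
next
  assume disc: "X = discrete_topology (topspace X)"
  have dopen: "\<And>S. S \<subseteq> topspace X \<Longrightarrow> openin X S"
    using disc_open[OF disc] .
  have fin: "\<And>A. A \<in> hyperspace_K X \<Longrightarrow> finite A"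
    using disc_fin[OF disc] unfolding hyperspace_K_def by blast
  have allopen: "openin (subtopology (vietoris X) H) S"
    if "S \<subseteq> topspace (subtopology (vietoris X) H)" for S
  proof -
    have SH: "S \<subseteq> H" using that by simp
    have "openin (vietoris X) (\<Union>A\<in>S. {A})"
    proof (rule openin_UN_vt)
      fix A assume "A \<in> S"
      then have "A \<in> hyperspace_K X" using SH assms(3) by blast
      then show "openin (vietoris X) {A}" by (intro vt_open_singleton dopen fin)
    qed
    then have "openin (subtopology (vietoris X) H) (H \<inter> (\<Union>A\<in>S. {A}))"
      by (rule openin_subtopology_Int2)
    moreover have "H \<inter> (\<Union>A\<in>S. {A}) = S" using SH by blast
    ultimately show ?thesis by simp
  qed
  show "extremally_disconnected (subtopology (vietoris X) H)"
    unfolding extremally_disconnected_def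
    by (intro allI impI allopen closure_of_subset_topspace)
qed

end
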